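(* $\mathrm{add}(\mathcal{M})\leq\mathfrak{a}(nwd)$.
   Context: $\mathcal{M}$ is the ideal of meager subsets of $2^\omega$ and $\mathrm{add}(\mathcal{M})$ its additivity. $nwd$ is the ideal on $2^{<\omega}$ of nowhere dense sets: $A\in nwd$ iff for every $\sigma\in2^{<\omega}$ there is $\tau\supseteq\sigma$ such that no extension of $\tau$ belongs to $A$. For an ideal $\mathcal{J}$, $\mathfrak{a}(\mathcal{J})$ is the smallest size of an uncountable family $\mathcal{A}$ of $\mathcal{J}$-positive sets which is maximal with respect to the property that $A\cap B\in\mathcal{J}$ for all distinct $A,B\in\mathcal{A}$. *)

theory Defs
  imports "HOL-Analysis.Analysis"
begin

text \<open>The Cantor space 2^omega is the type nat => bool with the product topology
  (bool carries the discrete topology).\<close>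

definition nowhere_dense :: "(nat \<Rightarrow> bool) set \<Rightarrow> bool" where
  "nowhere_dense X \<longleftrightarrow> interior (closure X) = {}"

definition meager :: "(nat \<Rightarrow> bool) set \<Rightarrow> bool" where
  "meager X \<longleftrightarrow> (\<exists>N :: nat \<Rightarrow> (nat \<Rightarrow> bool) set.
      (\<forall>n. nowhere_dense (N n)) \<and> X \<subseteq> (\<Union>n. N n))"

text \<open>Families witnessing add(M): families of meager sets whose union is not meager.
  add(M) is the least cardinality of such a family.\<close>

definition add_M_family :: "(nat \<Rightarrow> bool) set set \<Rightarrow> bool" where
  "add_M_family F \<longleftrightarrow> (\<forall>X\<in>F. meager X) \<and> \<not> meager (\<Union>F)"

text \<open>The ideal nwd on 2^{<omega} (finite binary sequences as bool lists);
  tau extends sigma iff sigma is a prefix of tau.\<close>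

definition nwd :: "bool list set set" where
  "nwd = {A. \<forall>\<sigma>. \<exists>\<tau>. (\<exists>u. \<tau> = \<sigma> @ u) \<and> (\<forall>\<rho>. (\<exists>v. \<rho> = \<tau> @ v) \<longrightarrow> \<rho> \<notin> A)}"

text \<open>Uncountable maximal J-almost disjoint families of J-positive sets;
  a(J) is the least cardinality of such a family.\<close>

definition uncountable_mad :: "'a set set \<Rightarrow> 'a set set \<Rightarrow> bool" where
  "uncountable_mad J \<A> \<longleftrightarrow>
     uncountable \<A> \<and>
     (\<forall>A\<in>\<A>. A \<notin> J) \<and>
     (\<forall>A\<in>\<A>. \<forall>B\<in>\<A>. A \<noteq> B \<longrightarrow> A \<inter> B \<in> J) \<and>
     (\<forall>B. B \<notin> J \<and> B \<notin> \<A> \<longrightarrow> (\<exists>A\<in>\<A>. A \<inter> B \<notin> J))"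

end

theory Submission
  imports Defs
begin

definition cyl :: "bool list \<Rightarrow> (nat \<Rightarrow> bool) set" where
  "cyl t = {x. \<forall>i<length t. x i = t!i}"

definition pre :: "(nat \<Rightarrow> bool) \<Rightarrow> nat \<Rightarrow> bool list" where
  "pre x n = map x [0..<n]"

definition avoidable :: "(nat \<Rightarrow> bool) set \<Rightarrow> bool" where
  "avoidable Z \<longleftrightarrow> (\<forall>s. \<exists>v. cyl (s@v) \<inter> Z = {})"

lemma cyl_open: "open (cyl t)"
proof -
  have "cyl t = {f. \<forall>i\<in>{..<length t}. f (id i) \<in> {t!i}}"
    unfolding cyl_def by auto
  also have "open \<dots>"
    by (rule product_topology_basis') (auto intro: open_discrete)
  finally show ?thesis .
qed

lemma length_pre[simp]: "length (pre x n) = n"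
  by (simp add: pre_def)

lemma nth_pre[simp]: "i < n \<Longrightarrow> pre x n ! i = x i"
  by (simp add: pre_def)

lemma in_cyl_pre: "x \<in> cyl (pre x n)"
  by (simp add: cyl_def)

lemma cyl_ne: "\<exists>x. x \<in> cyl t"
  by (rule exI[of _ "\<lambda>i. if i < length t then t!i else False"]) (simp add: cyl_def)

lemma cyl_append_sub: "cyl (s @ v) \<subseteq> cyl s"
  by (auto simp: cyl_def nth_append)

lemma pre_extends:
  assumes "x \<in> cyl s" "length s \<le> n"
  shows "\<exists>v. pre x n = s @ v"
proof -
  have "pre x n = take (length s) (pre x n) @ drop (length s) (pre x n)" by simp
  moreover have "take (length s) (pre x n) = s"
    using assms by (intro nth_equalityI) (auto simp: cyl_def)
  ultimately show ?thesis by metis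
qed

lemma nbhd:
  assumes "open U" "x \<in> U"
  shows "\<exists>n. cyl (pre x n) \<subseteq> U"
proof -
  have "openin (product_topology (\<lambda>i. euclidean) UNIV) U"
    using assms by (simp add: open_fun_def)
  from product_topology_open_contains_basis[OF this assms(2)]
  obtain X where X: "x \<in> (\<Pi>\<^sub>E i\<in>UNIV. X i)" "finite {i. X i \<noteq> topspace (euclidean::bool topology)}"
      "(\<Pi>\<^sub>E i\<in>UNIV. X i) \<subseteq> U" by auto
  have fin: "finite {i. X i \<noteq> UNIV}" using X(2) by simp
  obtain n where n0: "{i. X i \<noteq> UNIV} \<subseteq> {..<n}"
    using finite_nat_bounded[OF fin] by blast
  then have n: "\<forall>i\<in>{i. X i \<noteq> UNIV}. i < n" by auto
  have "cyl (pre x n) \<subseteq> (\<Pi>\<^sub>E i\<in>UNIV. X i)"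
  proof
    fix y assume y: "y \<in> cyl (pre x n)"
    have "y i \<in> X i" for i
    proof (cases "X i = UNIV")
      case False
      then have "i < n" using n by auto
      then have "y i = x i" using y by (auto simp: cyl_def)
      then show ?thesis using X(1) by auto
    qed auto
    then show "y \<in> (\<Pi>\<^sub>E i\<in>UNIV. X i)" by auto
  qed
  then show ?thesis using X(3) by blast
qed

lemma nowhere_dense_avoidable:
  assumes "nowhere_dense Z" shows "avoidable Z"
  unfolding avoidable_def
proof (rule ccontr)
  assume "\<not> (\<forall>s. \<exists>v. cyl (s @ v) \<inter> Z = {})"
  then obtain s where s: "\<And>v. cyl (s @ v) \<inter> Z \<noteq> {}" by blast
  have "cyl s \<subseteq> closure Z"
  proof
    fix x assume x: "x \<in> cyl s"
    show "x \<in> closure Z"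
      unfolding closure_iff_nhds_not_empty
    proof (intro allI impI)
      fix A S assume AS0: "S \<subseteq> A" "open S" "x \<in> S"
      then have AS: "open S \<and> x \<in> S \<and> S \<subseteq> A" by blast
      obtain n where "cyl (pre x n) \<subseteq> S" using nbhd[of S x] AS by blast
      then have n: "cyl (pre x n) \<subseteq> A" using AS by blast
      obtain w where "pre x (max n (length s)) = pre x n @ w"
        using pre_extends[OF in_cyl_pre[of x n], of "max n (length s)"] by auto
      then have "cyl (pre x (max n (length s))) \<subseteq> cyl (pre x n)"
        using cyl_append_sub by metis
      moreover obtain v where "pre x (max n (length s)) = s @ v"
        using pre_extends[OF x, of "max n (length s)"] by auto
      ultimately have "cyl (s @ v) \<subseteq> A" using n by auto
      then show "Z \<inter> A \<noteq> {}" using s[of v] by blast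
    qed
  qed
  moreover have "cyl s \<noteq> {}" using cyl_ne by blast
  ultimately have "interior (closure Z) \<noteq> {}"
    using cyl_open interior_maximal by (metis subset_empty)
  then show False using assms by (simp add: nowhere_dense_def)
qed

lemma avoidable_nowhere_dense:
  assumes "avoidable Z" shows "nowhere_dense Z"
  unfolding nowhere_dense_def
proof (rule ccontr)
  assume "interior (closure Z) \<noteq> {}"
  then obtain x where x: "x \<in> interior (closure Z)" by blast
  obtain n where n: "cyl (pre x n) \<subseteq> interior (closure Z)"
    using nbhd[OF open_interior x] by blast
  obtain v where v: "cyl (pre x n @ v) \<inter> Z = {}" using assms by (auto simp: avoidable_def)
  have "cyl (pre x n @ v) \<inter> closure Z = {}"
    using v cyl_open open_Int_closure_eq_empty by blast
  moreover have "cyl (pre x n @ v) \<subseteq> closure Z"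
    using n cyl_append_sub interior_subset by blast
  moreover obtain y where "y \<in> cyl (pre x n @ v)" using cyl_ne by blast
  ultimately show False by blast
qed

lemma avoidable_subset: "avoidable Z \<Longrightarrow> Y \<subseteq> Z \<Longrightarrow> avoidable Y"
  unfolding avoidable_def by blast

lemma avoidable_Un: assumes "avoidable Y" "avoidable Z" shows "avoidable (Y \<union> Z)"
  unfolding avoidable_def
proof
  fix s
  obtain v where v: "cyl (s @ v) \<inter> Y = {}" using assms(1) by (auto simp: avoidable_def)
  obtain w where w: "cyl ((s @ v) @ w) \<inter> Z = {}" using assms(2) unfolding avoidable_def by blast
  have "cyl (s @ v @ w) \<inter> Y = {}" using v cyl_append_sub[of "s@v" w] by auto
  with w show "\<exists>v. cyl (s @ v) \<inter> (Y \<union> Z) = {}" by (intro exI[of _ "v@w"]) auto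
qed

lemma avoidable_UN_le: "(\<And>n. avoidable (N n)) \<Longrightarrow> avoidable (\<Union>n\<le>(i::nat). N n)"
proof (induction i)
  case 0 then show ?case by simp
next
  case (Suc i)
  have "(\<Union>n\<le>Suc i. N n) = (\<Union>n\<le>i. N n) \<union> N (Suc i)" by (auto simp: le_Suc_eq)
  then show ?case using Suc avoidable_Un by metis
qed

lemma multi_avoid:
  assumes "finite S" "avoidable Z"
  shows "\<exists>u. \<forall>s\<in>S. cyl (s @ u) \<inter> Z = {}"
  using assms(1)
proof (induction S)
  case empty then show ?case by simp
next
  case (insert s S)
  then obtain u where u: "\<forall>s\<in>S. cyl (s @ u) \<inter> Z = {}" by blast
  obtain v where v: "cyl ((s @ u) @ v) \<inter> Z = {}" using assms(2) unfolding avoidable_def by blast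
  have "\<forall>s'\<in>S. cyl (s' @ u @ v) \<inter> Z = {}"
    using u cyl_append_sub by (metis append.assoc disjoint_iff subsetD)
  with v show ?case by (intro exI[of _ "u@v"]) auto
qed

definition blk :: "(nat \<Rightarrow> (nat\<Rightarrow>bool) set) \<Rightarrow> nat \<Rightarrow> nat \<Rightarrow> bool list" where
  "blk N i j = (SOME u. u \<noteq> [] \<and> last u \<and> (\<forall>s. length s = j \<longrightarrow> cyl (s@u) \<inter> (\<Union>n\<le>i. N n) = {}))"

lemma blk_prop:
  assumes "\<And>n. avoidable (N n)"
  shows "blk N i j \<noteq> [] \<and> last (blk N i j) \<and> (\<forall>s. length s = j \<longrightarrow> cyl (s @ blk N i j) \<inter> (\<Union>n\<le>i. N n) = {})"
proof -
  have fin: "finite {s::bool list. length s = j}" using finite_lists_length_eq[of "UNIV::bool set" j] by simp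
  have avi: "avoidable (\<Union>n\<le>i. N n)" by (rule avoidable_UN_le[OF assms])
  from multi_avoid[OF fin avi]
  obtain u where u: "\<forall>s\<in>{s::bool list. length s = j}. cyl (s @ u) \<inter> (\<Union>n\<le>i. N n) = {}"
    by blast
  have "\<exists>u. u \<noteq> [] \<and> last u \<and> (\<forall>s. length s = j \<longrightarrow> cyl (s@u) \<inter> (\<Union>n\<le>i. N n) = {})"
  proof (intro exI[of _ "u @ [True]"] conjI allI impI)
    fix s :: "bool list" assume "length s = j"
    then have "cyl (s @ u) \<inter> (\<Union>n\<le>i. N n) = {}" using u by auto
    then show "cyl (s @ u @ [True]) \<inter> (\<Union>n\<le>i. N n) = {}"
      using cyl_append_sub[of "s@u" "[True]"] by auto
  qed auto
  then show ?thesis unfolding blk_def by (rule someI_ex)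
qed

primrec jj :: "(nat \<Rightarrow> (nat\<Rightarrow>bool) set) \<Rightarrow> nat \<Rightarrow> nat" where
  "jj N 0 = 0"
| "jj N (Suc i) = jj N i + length (blk N i (jj N i))"

declare jj.simps(2)[simp del]

definition ub :: "(nat \<Rightarrow> (nat\<Rightarrow>bool) set) \<Rightarrow> nat \<Rightarrow> bool list" where
  "ub N i = blk N i (jj N i)"

definition bidx :: "(nat \<Rightarrow> (nat\<Rightarrow>bool) set) \<Rightarrow> nat \<Rightarrow> nat" where
  "bidx N p = (LEAST i. p < jj N (Suc i))"

definition xs :: "(nat \<Rightarrow> (nat\<Rightarrow>bool) set) \<Rightarrow> nat set \<Rightarrow> nat \<Rightarrow> bool" where
  "xs N S p = (if bidx N p \<in> S then ub N (bidx N p) ! (p - jj N (bidx N p)) else True)"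

context
  fixes N :: "nat \<Rightarrow> (nat\<Rightarrow>bool) set"
  assumes av: "\<And>n. avoidable (N n)"
begin

lemma ub_prop: "ub N i \<noteq> [] \<and> last (ub N i) \<and>
   (\<forall>s. length s = jj N i \<longrightarrow> cyl (s @ ub N i) \<inter> (\<Union>n\<le>i. N n) = {})"
  unfolding ub_def by (rule blk_prop[where N=N, OF av])

lemma jj_Suc: "jj N (Suc i) = jj N i + length (ub N i)"
  unfolding ub_def by (rule jj.simps(2))

lemma jj_smono: "strict_mono (jj N)"
  unfolding strict_mono_Suc_iff using ub_prop by (simp add: jj_Suc)

lemma jj_ge: "i \<le> jj N i"
  using jj_smono by (simp add: strict_mono_imp_increasing)

lemma jj_less_iff: "jj N a < jj N b \<longleftrightarrow> a < b"
  using jj_smono by (simp add: strict_mono_less)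

lemma jj_le_iff: "jj N a \<le> jj N b \<longleftrightarrow> a \<le> b"
  using jj_smono by (simp add: strict_mono_less_eq)

lemma bidx_prop: "jj N (bidx N p) \<le> p \<and> p < jj N (Suc (bidx N p))"
proof -
  have ex: "p < jj N (Suc p)" using jj_ge[of "Suc p"] by simp
  have 1: "p < jj N (Suc (bidx N p))" unfolding bidx_def by (rule LeastI[of _ p]) (rule ex)
  have 2: "jj N (bidx N p) \<le> p"
  proof (cases "bidx N p")
    case 0 then show ?thesis by simp
  next
    case (Suc m)
    then have "\<not> p < jj N (Suc m)" unfolding bidx_def
      by (metis Suc bidx_def lessI not_less_Least)
    then show ?thesis using Suc by simp
  qed
  from 1 2 show ?thesis by simp
qed

lemma bidx_unique: "jj N i \<le> p \<Longrightarrow> p < jj N (Suc i) \<Longrightarrow> bidx N p = i"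
proof -
  assume a: "jj N i \<le> p" "p < jj N (Suc i)"
  have b: "jj N (bidx N p) \<le> p" "p < jj N (Suc (bidx N p))" using bidx_prop by auto
  have "bidx N p < Suc i" using b(1) a(2) jj_less_iff by (meson le_less_trans)
  moreover have "i < Suc (bidx N p)" using a(1) b(2) jj_less_iff by (meson le_less_trans)
  ultimately show ?thesis by simp
qed

lemma xs_block: "i \<in> S \<Longrightarrow> xs N S \<in> cyl (pre (xs N S) (jj N i) @ ub N i)"
  unfolding cyl_def
proof (intro CollectI allI impI)
  fix q assume i: "i \<in> S" and q: "q < length (pre (xs N S) (jj N i) @ ub N i)"
  show "xs N S q = (pre (xs N S) (jj N i) @ ub N i) ! q"
  proof (cases "q < jj N i")
    case True then show ?thesis by (simp add: nth_append)
  next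
    case False
    then have "jj N i \<le> q" "q < jj N (Suc i)" using q by (auto simp: jj_Suc)
    then have "bidx N q = i" by (rule bidx_unique)
    then show ?thesis using False i by (simp add: xs_def nth_append)
  qed
qed

lemma xs_avoid:
  assumes "infinite S" shows "xs N S \<notin> N n"
proof
  assume x: "xs N S \<in> N n"
  obtain i where i: "i \<in> S" "n \<le> i" using assms infinite_nat_iff_unbounded_le by blast
  have "cyl (pre (xs N S) (jj N i) @ ub N i) \<inter> (\<Union>n\<le>i. N n) = {}"
    using ub_prop by simp
  then show False using xs_block[OF i(1)] x i(2) by blast
qed

lemma xs_last: "i \<in> S \<Longrightarrow> xs N S (jj N (Suc i) - 1)"
proof -
  assume i: "i \<in> S"
  let ?e = "jj N (Suc i) - 1"
  have ne: "ub N i \<noteq> []" "last (ub N i)" using ub_prop by auto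
  have lp: "length (ub N i) > 0" using ne(1) by simp
  have e: "jj N i \<le> ?e" "?e < jj N (Suc i)" using lp jj_Suc[of i] by arith+
  then have "bidx N ?e = i" by (rule bidx_unique)
  moreover have "?e - jj N i = length (ub N i) - 1" by (simp add: jj_Suc)
  ultimately show ?thesis using i ne by (simp add: xs_def last_conv_nth)
qed

lemma xs_out: "bidx N p \<notin> S \<Longrightarrow> xs N S p"
  by (simp add: xs_def)

end

lemma baire: "\<not> meager UNIV"
proof
  assume "meager UNIV"
  then have "\<exists>N::nat \<Rightarrow> (nat\<Rightarrow>bool) set. (\<forall>n. nowhere_dense (N n)) \<and> UNIV \<subseteq> (\<Union>n. N n)"
    unfolding meager_def .
  then obtain N :: "nat \<Rightarrow> (nat\<Rightarrow>bool) set" where N0: "(\<forall>n. nowhere_dense (N n)) \<and> UNIV \<subseteq> (\<Union>n. N n)" ..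
  have av: "\<And>n. avoidable (N n)" using N0 nowhere_dense_avoidable by blast
  have "xs N UNIV \<notin> N n" for n using xs_avoid[where N=N, OF av] by simp
  then show False using N0 by blast
qed

definition Mf :: "(nat \<Rightarrow> nat) \<Rightarrow> (nat \<Rightarrow> bool) set" where
  "Mf f = {x. \<exists>K. \<forall>n\<ge>K. \<exists>i. n \<le> i \<and> i < f n \<and> x i}"

lemma Mf_meager: "meager (Mf f)"
proof -
  define C where "C K = {x. \<forall>n\<ge>K. \<exists>i. n \<le> i \<and> i < f n \<and> x i}" for K
  have "avoidable (C K)" for K
    unfolding avoidable_def
  proof
    fix s :: "bool list"
    let ?n = "max K (length s)"
    let ?v = "replicate (f ?n - length s) False"
    have "x \<notin> C K" if x: "x \<in> cyl (s @ ?v)" for x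
    proof
      assume "x \<in> C K"
      then have H: "\<forall>n\<ge>K. \<exists>i. n \<le> i \<and> i < f n \<and> x i" by (simp add: C_def)
      have "K \<le> ?n" by simp
      then have "\<exists>i. ?n \<le> i \<and> i < f ?n \<and> x i" using H by blast
      then obtain i where i: "?n \<le> i" "i < f ?n" "x i" by blast
      have "i < length (s @ ?v)" "length s \<le> i" using i by auto
      then have "x i = (s @ ?v) ! i" using x by (auto simp: cyl_def)
      also have "\<dots> = False" using \<open>length s \<le> i\<close> \<open>i < length (s @ ?v)\<close> by (simp add: nth_append)
      finally show False using i(3) by simp
    qed
    then show "\<exists>v. cyl (s @ v) \<inter> C K = {}" by blast
  qed
  then have "\<And>K. nowhere_dense (C K)" using avoidable_nowhere_dense by blast
  moreover have "Mf f \<subseteq> (\<Union>K. C K)" unfolding Mf_def C_def by blast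
  ultimately show ?thesis unfolding meager_def by blast
qed

lemma bound:
  assumes av: "\<And>n. avoidable (N n)" and fm: "strict_mono f" and fgt: "\<And>n. n < f n"
    and sub: "Mf f \<subseteq> (\<Union>n. N n)"
  shows "\<exists>K. \<forall>k\<ge>K. f k \<le> jj N (k+2)"
proof (rule ccontr)
  assume "\<not> ?thesis"
  then have bad: "\<forall>K. \<exists>k\<ge>K. jj N (k+2) < f k" by (auto simp: not_le)
  define S where "S = {Suc i | i. \<exists>k. jj N i \<le> k \<and> k < jj N (Suc i) \<and> jj N (k+2) < f k}"
  have "infinite S" unfolding infinite_nat_iff_unbounded_le
  proof
    fix m
    obtain k where k: "k \<ge> jj N m" "jj N (k+2) < f k" using bad by blast
    let ?i = "bidx N k"
    have b: "jj N ?i \<le> k" "k < jj N (Suc ?i)" using bidx_prop[where N=N, OF av] by auto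
    have "jj N m < jj N (Suc ?i)" using k(1) b(2) by simp
    then have "m \<le> ?i" using jj_less_iff[where N=N, OF av] by simp
    moreover have "Suc ?i \<in> S" unfolding S_def using b k(2) by blast
    ultimately show "\<exists>n\<ge>m. n \<in> S" by (intro exI[of _ "Suc ?i"]) auto
  qed
  let ?x = "xs N S"
  have "\<forall>n. \<exists>i. n \<le> i \<and> i < f n \<and> ?x i"
  proof
    fix n :: nat
    let ?i' = "bidx N n"
    have b: "jj N ?i' \<le> n" "n < jj N (Suc ?i')" using bidx_prop[where N=N, OF av] by auto
    show "\<exists>i. n \<le> i \<and> i < f n \<and> ?x i"
    proof (cases "?i' \<in> S")
      case True
      then obtain i k where ik: "?i' = Suc i" "jj N i \<le> k" "k < jj N (Suc i)" "jj N (k+2) < f k"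
        unfolding S_def by blast
      let ?e = "jj N (Suc ?i') - 1"
      have "k \<le> n" using ik b by simp
      then have "f k \<le> f n" using fm by (simp add: strict_mono_less_eq)
      have "i \<le> k" using ik(2) jj_ge[where N=N, OF av, of i] by simp
      then have "jj N (Suc ?i') \<le> jj N (k+2)" using ik(1) jj_le_iff[where N=N, OF av] by simp
      then have "?e < f n" using ik(4) \<open>f k \<le> f n\<close> by linarith
      moreover have "n \<le> ?e" using b by simp
      moreover have "?x ?e" using xs_last[where N=N, OF av True] .
      ultimately show ?thesis by blast
    next
      case False
      then show ?thesis using xs_out[where N=N, OF av False] fgt[of n] by blast
    qed
  qed
  then have "?x \<in> Mf f" unfolding Mf_def by blast
  then obtain n where "?x \<in> N n" using sub by blast
  then show False using xs_avoid[where N=N, OF av \<open>infinite S\<close>] by blast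
qed

lemma meager_subset: "meager A \<Longrightarrow> B \<subseteq> A \<Longrightarrow> meager B"
  unfolding meager_def by blast

lemma pre_cyl: "x \<in> cyl t \<Longrightarrow> pre x (length t) = t"
  by (intro nth_equalityI) (auto simp: cyl_def)

lemma pre_mono: "m \<le> n \<Longrightarrow> \<exists>v. pre x n = pre x m @ v"
  using pre_extends[OF in_cyl_pre[of x m]] by simp

lemma CL:
  fixes AA :: "'a set" and D :: "'a \<Rightarrow> nat \<Rightarrow> bool list set" and \<tau> :: "nat \<Rightarrow> bool list"
  assumes H: "\<forall>F. (\<forall>X\<in>F. meager X) \<and> (card_of F, card_of AA) \<in> ordLeq \<longrightarrow> meager (\<Union>F)"
    and dense: "\<forall>\<alpha>\<in>AA. \<forall>k s. \<exists>v. s @ v \<in> D \<alpha> k"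
    and up: "\<forall>\<alpha>\<in>AA. \<forall>k s v. s \<in> D \<alpha> k \<longrightarrow> s @ v \<in> D \<alpha> k"
  shows "\<exists>w. \<forall>\<alpha>\<in>AA. \<exists>K. \<forall>k\<ge>K. \<tau> k @ w k \<in> D \<alpha> k"
proof -
  define Op where "Op \<alpha> k = {x. \<exists>l. \<tau> k @ pre x l \<in> D \<alpha> k}" for \<alpha> k
  define Z where "Z \<alpha> = (\<Union>k. - Op \<alpha> k)" for \<alpha>
  have mZ: "meager (Z \<alpha>)" if a: "\<alpha> \<in> AA" for \<alpha>
  proof -
    have "avoidable (- Op \<alpha> k)" for k
      unfolding avoidable_def
    proof
      fix s
      obtain v where v: "(\<tau> k @ s) @ v \<in> D \<alpha> k" using dense a by blast
      have "x \<in> Op \<alpha> k" if x: "x \<in> cyl (s @ v)" for x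
        using pre_cyl[OF x] v unfolding Op_def by (intro CollectI exI[of _ "length (s@v)"]) simp
      then show "\<exists>v. cyl (s @ v) \<inter> - Op \<alpha> k = {}" by blast
    qed
    then have "\<forall>k. nowhere_dense (- Op \<alpha> k)" using avoidable_nowhere_dense by blast
    then show ?thesis unfolding meager_def Z_def by (intro exI[of _ "\<lambda>k. - Op \<alpha> k"]) auto
  qed
  have "meager (\<Union>(Z ` AA))"
    using H mZ card_of_image[of Z AA] by blast
  then obtain x where x: "x \<notin> \<Union>(Z ` AA)"
    using baire meager_subset by blast
  have xO: "x \<in> Op \<alpha> k" if "\<alpha> \<in> AA" for \<alpha> k
    using x that unfolding Z_def by blast
  define fa where "fa \<alpha> k = (LEAST l. \<tau> k @ pre x l \<in> D \<alpha> k)" for \<alpha> k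
  have fa: "\<tau> k @ pre x (fa \<alpha> k) \<in> D \<alpha> k" if "\<alpha> \<in> AA" for \<alpha> k
    using xO[OF that, of k] unfolding Op_def fa_def by (auto intro: LeastI)
  define fp where "fp \<alpha> n = n + 1 + (\<Sum>i\<le>n. fa \<alpha> i)" for \<alpha> n
  have fp_mono: "strict_mono (fp \<alpha>)" for \<alpha>
    unfolding strict_mono_Suc_iff fp_def by simp
  have fp_gt: "n < fp \<alpha> n" for \<alpha> n unfolding fp_def by simp
  have fp_ge: "fa \<alpha> n \<le> fp \<alpha> n" for \<alpha> n
  proof -
    have "fa \<alpha> n \<le> (\<Sum>i\<le>n. fa \<alpha> i)" by (rule member_le_sum) auto
    then show ?thesis unfolding fp_def by simp
  qed
  have mm: "\<forall>X\<in>(\<lambda>\<alpha>. Mf (fp \<alpha>)) ` AA. meager X" using Mf_meager by blast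
  have "meager (\<Union>((\<lambda>\<alpha>. Mf (fp \<alpha>)) ` AA))"
    by (rule H[rule_format, OF conjI[OF mm card_of_image]])
  then have "\<exists>N::nat \<Rightarrow> (nat\<Rightarrow>bool) set. (\<forall>n. nowhere_dense (N n)) \<and> \<Union>((\<lambda>\<alpha>. Mf (fp \<alpha>)) ` AA) \<subseteq> (\<Union>n. N n)"
    unfolding meager_def .
  then obtain N :: "nat \<Rightarrow> (nat\<Rightarrow>bool) set" where
    N0: "(\<forall>n. nowhere_dense (N n)) \<and> \<Union>((\<lambda>\<alpha>. Mf (fp \<alpha>)) ` AA) \<subseteq> (\<Union>n. N n)" ..
  have av: "\<And>n. avoidable (N n)" using N0 nowhere_dense_avoidable by blast
  show ?thesis
  proof (intro exI[of _ "\<lambda>k. pre x (jj N (k+2))"] ballI)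
    fix \<alpha> assume a: "\<alpha> \<in> AA"
    have "Mf (fp \<alpha>) \<subseteq> (\<Union>n. N n)" using N0 a by blast
    from bound[where N=N and f="fp \<alpha>", OF av fp_mono fp_gt this]
    obtain K where K: "\<forall>k\<ge>K. fp \<alpha> k \<le> jj N (k+2)" by blast
    have "\<tau> k @ pre x (jj N (k+2)) \<in> D \<alpha> k" if k: "k \<ge> K" for k
    proof -
      have "fa \<alpha> k \<le> jj N (k+2)" using K k fp_ge[of \<alpha> k] by (meson le_trans)
      then obtain v where v: "pre x (jj N (k+2)) = pre x (fa \<alpha> k) @ v" using pre_mono by blast
      show ?thesis using up a fa[OF a, of k] v by (metis append.assoc)
    qed
    then show "\<exists>K. \<forall>k\<ge>K. \<tau> k @ pre x (jj N (k+2)) \<in> D \<alpha> k" by blast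
  qed
qed

lemma nwd_subset: "A \<in> nwd \<Longrightarrow> B \<subseteq> A \<Longrightarrow> B \<in> nwd"
  unfolding nwd_def by blast

lemma nwd_Un:
  assumes "A \<in> nwd" "B \<in> nwd" shows "A \<union> B \<in> nwd"
  unfolding nwd_def
proof (intro CollectI allI)
  fix \<sigma> :: "bool list"
  obtain u where u: "\<forall>\<rho>. (\<exists>v. \<rho> = (\<sigma> @ u) @ v) \<longrightarrow> \<rho> \<notin> A"
    using assms(1) unfolding nwd_def by blast
  obtain u' where u': "\<forall>\<rho>. (\<exists>v. \<rho> = ((\<sigma> @ u) @ u') @ v) \<longrightarrow> \<rho> \<notin> B"
    using assms(2) unfolding nwd_def by blast
  show "\<exists>\<tau>. (\<exists>u. \<tau> = \<sigma> @ u) \<and> (\<forall>\<rho>. (\<exists>v. \<rho> = \<tau> @ v) \<longrightarrow> \<rho> \<notin> A \<union> B)"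
  proof (rule exI[of _ "\<sigma> @ u @ u'"], intro conjI allI impI)
    fix \<rho> assume "\<exists>v. \<rho> = (\<sigma> @ u @ u') @ v"
    then obtain v where v: "\<rho> = (\<sigma> @ u @ u') @ v" by blast
    have "\<rho> \<notin> A" using u v by (metis append.assoc)
    moreover have "\<rho> \<notin> B" using u' v by (metis append.assoc)
    ultimately show "\<rho> \<notin> A \<union> B" by blast
  qed auto
qed

lemma nwd_UN_less: "(\<And>m. m < k \<Longrightarrow> X m \<in> nwd) \<Longrightarrow> (\<Union>m<(k::nat). X m) \<in> nwd"
proof (induction k)
  case 0 then show ?case unfolding nwd_def by blast
next
  case (Suc k)
  have "(\<Union>m<Suc k. X m) = (\<Union>m<k. X m) \<union> X k" by (auto simp: less_Suc_eq)
  then show ?case using Suc nwd_Un by simp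
qed

lemma nwd_finite:
  assumes "finite F" shows "F \<in> nwd"
  unfolding nwd_def
proof (intro CollectI allI)
  fix \<sigma> :: "bool list"
  define L where "L = Suc (\<Sum>\<rho>\<in>F. length \<rho>)"
  have lt: "length \<rho> < L" if "\<rho> \<in> F" for \<rho>
    using member_le_sum[of \<rho> F length] that assms unfolding L_def by simp
  show "\<exists>\<tau>. (\<exists>u. \<tau> = \<sigma> @ u) \<and> (\<forall>\<rho>. (\<exists>v. \<rho> = \<tau> @ v) \<longrightarrow> \<rho> \<notin> F)"
  proof (rule exI[of _ "\<sigma> @ replicate L False"], intro conjI allI impI)
    fix \<rho> assume "\<exists>v. \<rho> = (\<sigma> @ replicate L False) @ v"
    then have "L \<le> length \<rho>" by auto
    then show "\<rho> \<notin> F" using lt by fastforce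
  qed auto
qed

theorem mainTheorem19:
  "\<forall>\<A>. uncountable_mad nwd \<A> \<longrightarrow>
      (\<exists>F. add_M_family F \<and> (card_of F, card_of \<A>) \<in> ordLeq)"
proof (intro allI impI)
  fix AA :: "bool list set set"
  assume mad: "uncountable_mad nwd AA"
  show "\<exists>F. add_M_family F \<and> (card_of F, card_of AA) \<in> ordLeq"
  proof (rule ccontr)
    assume nF: "\<not> ?thesis"
    have H: "\<forall>F. (\<forall>X\<in>F. meager X) \<and> (card_of F, card_of AA) \<in> ordLeq \<longrightarrow> meager (\<Union>F)"
      using nF unfolding add_M_family_def by blast
    have unc: "uncountable AA" and pos: "\<forall>A\<in>AA. A \<notin> nwd"
      and ad: "\<forall>A\<in>AA. \<forall>B\<in>AA. A \<noteq> B \<longrightarrow> A \<inter> B \<in> nwd"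
      and mx: "\<forall>B. B \<notin> nwd \<and> B \<notin> AA \<longrightarrow> (\<exists>A\<in>AA. A \<inter> B \<notin> nwd)"
      using mad unfolding uncountable_mad_def by blast+
    have sg_ex: "\<exists>\<sigma>. \<forall>u. \<exists>v. \<sigma> @ u @ v \<in> A" if "A \<in> AA" for A
    proof -
      have "A \<notin> nwd" using pos that by blast
      then obtain \<sigma> where s: "\<forall>\<tau>. (\<exists>u. \<tau> = \<sigma> @ u) \<longrightarrow> \<not> (\<forall>\<rho>. (\<exists>v. \<rho> = \<tau> @ v) \<longrightarrow> \<rho> \<notin> A)"
        unfolding nwd_def by blast
      have "\<exists>v. \<sigma> @ u @ v \<in> A" for u
        using s[rule_format, of "\<sigma> @ u"] by auto
      then show ?thesis by blast
    qed
    define sg where "sg (A::bool list set) = (SOME \<sigma>. \<forall>u. \<exists>v. \<sigma> @ u @ v \<in> A)" for A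
    have sg: "\<forall>u. \<exists>v. sg A @ u @ v \<in> A" if "A \<in> AA" for A
      unfolding sg_def using someI_ex[OF sg_ex[OF that]] .
    have "\<exists>\<sigma>. infinite {A\<in>AA. sg A = \<sigma>}"
    proof (rule ccontr)
      assume "\<not> ?thesis"
      then have "\<forall>\<sigma>. countable {A\<in>AA. sg A = \<sigma>}" by (auto intro: countable_finite)
      then have "countable (\<Union>\<sigma>\<in>UNIV. {A\<in>AA. sg A = \<sigma>})" by (intro countable_UN) auto
      moreover have "(\<Union>\<sigma>\<in>UNIV. {A\<in>AA. sg A = \<sigma>}) = AA" by auto
      ultimately show False using unc by simp
    qed
    then obtain \<sigma> where inf: "infinite {A\<in>AA. sg A = \<sigma>}" by blast
    from infinite_countable_subset[OF inf] obtain a :: "nat \<Rightarrow> bool list set"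
      where a: "inj a" "range a \<subseteq> {A\<in>AA. sg A = \<sigma>}" by blast
    have aA: "a k \<in> AA" for k using a(2) by blast
    have adense: "\<forall>u. \<exists>v. \<sigma> @ u @ v \<in> a k" for k
    proof -
      have "sg (a k) = \<sigma>" using a(2) by blast
      then show ?thesis using sg[OF aA[of k]] by simp
    qed
    have aad: "a k \<inter> a m \<in> nwd" if "k \<noteq> m" for k m
      using ad aA a(1) that by (meson injD)
    define D where "D A k = (if A = a k then UNIV else {s. \<forall>v. s @ v \<notin> A \<inter> a k})" for A k
    have dense: "\<forall>A\<in>AA. \<forall>k s. \<exists>v. s @ v \<in> D A k"
    proof (intro ballI allI)
      fix A k s assume A: "A \<in> AA"
      show "\<exists>v. s @ v \<in> D A k"
      proof (cases "A = a k")
        case True then show ?thesis by (simp add: D_def)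
      next
        case False
        then have "A \<inter> a k \<in> nwd" using ad A aA by blast
        then obtain u where u: "\<forall>\<rho>. (\<exists>v. \<rho> = (s @ u) @ v) \<longrightarrow> \<rho> \<notin> A \<inter> a k"
          unfolding nwd_def by blast
        then have "s @ u \<in> D A k" using False by (simp add: D_def)
        then show ?thesis by blast
      qed
    qed
    have up: "\<forall>A\<in>AA. \<forall>k s v. s \<in> D A k \<longrightarrow> s @ v \<in> D A k"
      unfolding D_def by auto
    obtain w where w: "\<forall>A\<in>AA. \<exists>K. \<forall>k\<ge>K. (\<sigma> @ from_nat k) @ w k \<in> D A k"
      using CL[OF H dense up, of "\<lambda>k. \<sigma> @ from_nat k"] by blast
    define NN where "NN k = (\<Union>m<k. a k \<inter> a m)" for k
    have NN: "NN k \<in> nwd" for k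
      unfolding NN_def by (rule nwd_UN_less) (auto intro: aad)
    have "\<exists>r. r \<in> a k \<and> r \<notin> NN k \<and> (\<exists>z. r = \<sigma> @ from_nat k @ w k @ z)" for k
    proof -
      have "\<forall>\<sigma>'. \<exists>\<tau>. (\<exists>u. \<tau> = \<sigma>' @ u) \<and> (\<forall>\<rho>. (\<exists>v. \<rho> = \<tau> @ v) \<longrightarrow> \<rho> \<notin> NN k)"
        using NN[of k] unfolding nwd_def by (rule CollectD)
      then obtain \<tau> u where tu: "\<tau> = (\<sigma> @ from_nat k @ w k) @ u"
        "\<forall>\<rho>. (\<exists>v. \<rho> = \<tau> @ v) \<longrightarrow> \<rho> \<notin> NN k" by blast
      then have u: "\<forall>\<rho>. (\<exists>v. \<rho> = (\<sigma> @ from_nat k @ w k @ u) @ v) \<longrightarrow> \<rho> \<notin> NN k"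
        by simp
      obtain v where v: "\<sigma> @ (from_nat k @ w k @ u) @ v \<in> a k" using adense by blast
      show ?thesis
        using u v by (intro exI[of _ "\<sigma> @ (from_nat k @ w k @ u) @ v"]) auto
    qed
    then obtain \<rho> where \<rho>: "\<And>k. \<rho> k \<in> a k" "\<And>k. \<rho> k \<notin> NN k"
        "\<And>k. \<exists>z. \<rho> k = \<sigma> @ from_nat k @ w k @ z"
      by metis
    define B where "B = range \<rho>"
    have Bpos: "B \<notin> nwd"
    proof
      assume "B \<in> nwd"
      then obtain u where u: "\<forall>r. (\<exists>v. r = (\<sigma> @ u) @ v) \<longrightarrow> r \<notin> B"
        unfolding nwd_def by blast
      obtain z where z: "\<rho> (to_nat u) = \<sigma> @ from_nat (to_nat u) @ w (to_nat u) @ z"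
        using \<rho>(3) by blast
      then have "\<rho> (to_nat u) = (\<sigma> @ u) @ (w (to_nat u) @ z)" by simp
      then show False using u unfolding B_def by blast
    qed
    have Bad: "A \<inter> B \<in> nwd" if A: "A \<in> AA" for A
    proof (cases "A \<in> range a")
      case True
      then obtain m where m: "A = a m" by blast
      have "A \<inter> B \<subseteq> \<rho> ` {..m}"
      proof
        fix r assume r: "r \<in> A \<inter> B"
        then obtain k where k: "r = \<rho> k" unfolding B_def by blast
        have "k \<le> m"
        proof (rule ccontr)
          assume "\<not> k \<le> m"
          then have "r \<in> NN k" using r k m \<rho>(1)[of k] unfolding NN_def by auto
          then show False using \<rho>(2) k by blast
        qed
        then show "r \<in> \<rho> ` {..m}" using k by blast
      qed
      then show ?thesis using nwd_finite nwd_subset by blast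
    next
      case False
      obtain K where K: "\<forall>k\<ge>K. (\<sigma> @ from_nat k) @ w k \<in> D A k" using w A by blast
      have "A \<inter> B \<subseteq> \<rho> ` {..<K}"
      proof
        fix r assume r: "r \<in> A \<inter> B"
        then obtain k where k: "r = \<rho> k" unfolding B_def by blast
        have "k < K"
        proof (rule ccontr)
          assume "\<not> k < K"
          then have "(\<sigma> @ from_nat k) @ w k \<in> D A k" using K by simp
          moreover have "A \<noteq> a k" using False by blast
          ultimately have "\<forall>v. ((\<sigma> @ from_nat k) @ w k) @ v \<notin> A \<inter> a k" by (simp add: D_def)
          moreover obtain z where "\<rho> k = ((\<sigma> @ from_nat k) @ w k) @ z" using \<rho>(3)[of k] by auto
          ultimately show False using r k \<rho>(1)[of k] by auto
        qed
        then show "r \<in> \<rho> ` {..<K}" using k by blast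
      qed
      then show ?thesis using nwd_finite nwd_subset by blast
    qed
    have "B \<notin> AA"
    proof
      assume "B \<in> AA"
      then have "B \<inter> B \<in> nwd" by (rule Bad)
      then show False using Bpos by simp
    qed
    then obtain A where "A \<in> AA" "A \<inter> B \<notin> nwd" using mx Bpos by blast
    then show False using Bad by blast
  qed
qed

end
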